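(* Let $a\in(0,1)$ and let $h:\mathbb R_+\to\mathbb R_+$ be differentiable, bounded and bounded away from $0$ on $(0,\infty)$, with $h_t=h_{at}$ for all $t>0$. If $\zeta>-1$, then $$\int_1^ts^\zeta h_s\,ds\sim t^{\zeta+1}\tilde h_t\quad\text{as }t\to\infty,\qquad\text{where}\quad\tilde h_t=-\log a\cdot\int_0^\infty a^{r(1+\zeta)}h_{a^rt}\,dr,$$ and $f\sim g$ means $f_t/g_t\to1$. *)

theory Defs
  imports "HOL-Analysis.Analysis"
begin

definition htilde :: "real \<Rightarrow> real \<Rightarrow> (real \<Rightarrow> real) \<Rightarrow> real \<Rightarrow> real" where
  "htilde a \<zeta> h t = - ln a * integral {0..} (\<lambda>r. a powr (r * (1 + \<zeta>)) * h (a powr r * t))"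

end

theory Submission
  imports Defs
begin

theorem lemma2p4p3:
  fixes a \<zeta> :: real and h :: "real \<Rightarrow> real"
  assumes a: "0 < a" "a < 1"
    and diff: "\<forall>t>0. h differentiable (at t)"
    and bdd: "\<exists>C. \<forall>t>0. h t \<le> C"
    and away: "\<exists>c>0. \<forall>t>0. c \<le> h t"
    and per: "\<forall>t>0. h t = h (a * t)"
    and zeta: "\<zeta> > -1"
  shows "((\<lambda>t. integral {1..t} (\<lambda>s. s powr \<zeta> * h s) / (t powr (\<zeta> + 1) * htilde a \<zeta> h t))
           \<longlongrightarrow> 1) at_top"
proof -
  obtain C where C: "\<forall>t>0. h t \<le> C" using bdd by blast
  obtain c where c: "c > 0" "\<forall>t>0. c \<le> h t" using away by blast
  define f where "f = (\<lambda>s::real. s powr \<zeta> * h s)"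
  define L where "L = - ln a"
  have L: "L > 0" using a by (simp add: L_def)
  have hcont: "continuous_on {0<..} h"
    using diff by (intro continuous_at_imp_continuous_on) (auto intro: differentiable_imp_continuous_within)
  have fcont': "continuous_on S f" if "S \<subseteq> {0<..}" for S
  proof -
    have "continuous_on S h" using hcont that by (rule continuous_on_subset)
    then show ?thesis unfolding f_def using that by (intro continuous_intros) auto
  qed
  have fcont: "continuous_on {x..y} f" if "x > 0" for x y
    using that by (intro fcont') auto
  have fnn: "f s \<ge> 0" if "s \<ge> 0" for s
  proof (cases "s = 0")
    case False
    have "s > 0" using False that by simp
    then have "h s \<ge> 0" using c by force
    then show ?thesis unfolding f_def by simp
  qed (simp add: f_def)
  have fle: "f s \<le> C * s powr \<zeta>" if "s \<ge> 0" for s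
  proof (cases "s = 0")
    case False
    then have "s > 0" using that by simp
    then show ?thesis using C unfolding f_def by (simp add: mult.commute mult_left_mono)
  qed (simp add: f_def)
  have fint0: "f integrable_on {0..x}" if "x \<ge> 0" for x
  proof -
    have "f integrable_on {0<..<x}"
    proof (rule measurable_bounded_by_integrable_imp_integrable)
      show "f \<in> borel_measurable (lebesgue_on {0<..<x})"
        by (intro continuous_imp_measurable_on_sets_lebesgue fcont') auto
      have "((\<lambda>s. C * s powr \<zeta>) has_integral C * (x powr (\<zeta>+1) / (\<zeta>+1))) {0..x}"
        using has_integral_powr_from_0[OF zeta that] by (rule has_integral_mult_right)
      then show "(\<lambda>s. C * s powr \<zeta>) integrable_on {0<..<x}"
        using integrable_on_Icc_iff_Ioo by blast
      show "norm (f s) \<le> C * s powr \<zeta>" if "s \<in> {0<..<x}" for s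
        using fnn fle that by auto
    qed auto
    then show ?thesis using integrable_on_Icc_iff_Ioo by blast
  qed
  define K where "K = integral {0..1} f"
  have Kbound: "\<bar>K - integral {x..1} f\<bar> \<le> C * (x powr (\<zeta>+1) / (\<zeta>+1))" if "0 < x" "x \<le> 1" for x
  proof -
    have "integral {0..x} f + integral {x..1} f = K"
      unfolding K_def using that fint0[of 1] by (intro Henstock_Kurzweil_Integration.integral_combine) auto
    moreover have "integral {0..x} f \<ge> 0"
      using fint0[of x] that fnn
      by (intro Henstock_Kurzweil_Integration.integral_nonneg) auto
    moreover have "integral {0..x} f \<le> C * (x powr (\<zeta>+1) / (\<zeta>+1))"
    proof -
      have hi: "((\<lambda>s. C * s powr \<zeta>) has_integral C * (x powr (\<zeta>+1) / (\<zeta>+1))) {0..x}"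
        using has_integral_powr_from_0[OF zeta, of x] that by (intro has_integral_mult_right) auto
      have "integral {0..x} f \<le> integral {0..x} (\<lambda>s. C * s powr \<zeta>)"
        using fint0[of x] that hi fle
        by (intro integral_le) (auto simp: has_integral_integrable)
      then show ?thesis using integral_unique[OF hi] by linarith
    qed
    ultimately show ?thesis by linarith
  qed
  have uder: "((\<lambda>r. a powr r * t) has_field_derivative (a powr r * ln a * t)) (at r within S)" for t r S
  proof -
    have eq: "(\<lambda>r. a powr r * t) = (\<lambda>r. exp (r * ln a) * t)" using a by (auto simp: powr_def)
    show ?thesis unfolding eq using a by (auto intro!: derivative_eq_intros simp: powr_def)
  qed
  define g where "g = (\<lambda>t r. a powr (r * (1 + \<zeta>)) * h (a powr r * t))"
  have subst: "(g t has_integral integral {a powr y * t..t} f / (L * t powr (\<zeta>+1))) {0..y}"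
    if t: "t > 0" and y: "y \<ge> 0" for t y
  proof -
    define x0 where "x0 = a powr y * t"
    define u where "u = (\<lambda>r. a powr r * t)"
    define F where "F = (\<lambda>x. integral {x0..x} f)"
    have x0: "x0 > 0" using a t by (simp add: x0_def)
    have ay: "a powr r \<le> 1" "a powr y \<le> a powr r" if "r \<in> {0..y}" for r
      using powr_mono'[of 0 r a] powr_mono'[of r y a] a that by auto
    have uimg: "u ` {0..y} \<subseteq> {x0..t}"
      using ay t unfolding u_def x0_def by (auto intro: mult_right_mono)
    have der: "((F \<circ> u) has_vector_derivative (f (u r) * (a powr r * ln a * t))) (at r within {0..y})"
      if r: "r \<in> {0..y}" for r
    proof -
      have "(F has_field_derivative f (u r)) (at (u r) within {x0..t})"
      proof -
        have "u r \<in> {x0..t}" using uimg r by blast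
        then show ?thesis unfolding F_def by (intro integral_has_real_derivative fcont x0)
      qed
      then have "(F has_field_derivative f (u r)) (at (u r) within u ` {0..y})"
        using uimg by (rule DERIV_subset)
      from DERIV_image_chain[OF this uder[of t r "{0..y}", folded u_def]]
      show ?thesis by (simp add: has_real_derivative_iff_has_vector_derivative)
    qed
    have ftc: "((\<lambda>r. f (u r) * (a powr r * ln a * t)) has_integral (F (u y) - F (u 0))) {0..y}"
      using fundamental_theorem_of_calculus[OF y der] by simp
    have Fy: "F (u y) = 0" unfolding F_def u_def x0_def by simp
    have F0: "F (u 0) = integral {a powr y * t..t} f" unfolding F_def u_def x0_def using a by simp
    have pt: "f (u r) * (a powr r * ln a * t) = - (L * t powr (\<zeta>+1)) * g t r" for r
    proof -
      have "(a powr r * t) powr \<zeta> = a powr (r * \<zeta>) * t powr \<zeta>"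
        using a t by (simp add: powr_mult powr_powr)
      moreover have "a powr (r * (1 + \<zeta>)) = a powr r * a powr (r * \<zeta>)"
        by (simp add: distrib_left powr_add)
      moreover have "t powr (\<zeta>+1) = t powr \<zeta> * t"
        using t by (simp add: powr_add)
      ultimately show ?thesis unfolding f_def u_def g_def L_def by (simp add: algebra_simps)
    qed
    have "((\<lambda>r. - (L * t powr (\<zeta>+1)) * g t r) has_integral - integral {a powr y * t..t} f) {0..y}"
      using ftc unfolding pt Fy F0 by simp
    then have "((\<lambda>r. (1 / (- (L * t powr (\<zeta>+1)))) * (- (L * t powr (\<zeta>+1)) * g t r)) has_integral
        (1 / (- (L * t powr (\<zeta>+1)))) * (- integral {a powr y * t..t} f)) {0..y}"
      by (rule has_integral_mult_right)
    moreover have "L * t powr (\<zeta>+1) \<noteq> 0" using L t by simp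
    ultimately show ?thesis by simp
  qed
  have xlim: "((\<lambda>y. a powr y * t) \<longlongrightarrow> 0) at_top" for t
  proof -
    have "filterlim (\<lambda>y. ln a * y) at_bot at_top"
      using a by (intro filterlim_tendsto_neg_mult_at_bot[OF tendsto_const]) (auto simp: filterlim_ident)
    then have "((\<lambda>y. exp (ln a * y)) \<longlongrightarrow> 0) at_top"
      using exp_at_bot filterlim_compose by blast
    then have "((\<lambda>y. a powr y) \<longlongrightarrow> 0) at_top" using a by (simp add: powr_def mult.commute)
    then show ?thesis using tendsto_mult_left_zero by blast
  qed
  define A where "A = (\<lambda>t. integral {1..t} f)"
  have Knn: "K \<ge> 0" unfolding K_def using fint0[of 1] fnn
    by (intro Henstock_Kurzweil_Integration.integral_nonneg) auto
  have hint: "(g t has_integral (K + A t) / (L * t powr (\<zeta>+1))) {0..}" if t: "t \<ge> 1" for t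
  proof (rule has_integral_to_inf)
    show "g t integrable_on {0..y}" for y
    proof (rule integrable_continuous_interval)
      have "continuous_on {0..y} (\<lambda>r. h (a powr r * t))"
        by (rule continuous_on_compose2[OF hcont]) (use a t in \<open>auto intro!: continuous_intros\<close>)
      then show "continuous_on {0..y} (g t)" unfolding g_def using a by (auto intro!: continuous_intros)
    qed
    show "g t y \<ge> 0" if "y \<ge> 0" for y
    proof -
      have "a powr y * t > 0" using a t by simp
      then have "c \<le> h (a powr y * t)" using c by blast
      then have "h (a powr y * t) \<ge> 0" using c(1) by linarith
      then show ?thesis unfolding g_def by simp
    qed
    have ev: "\<forall>\<^sub>F y in at_top. y \<ge> 0 \<and> a powr y * t \<le> 1"
      using eventually_ge_at_top[of 0] order_tendstoD(2)[OF xlim[of t] zero_less_one] by eventually_elim auto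
    have eq: "\<forall>\<^sub>F y in at_top. (integral {a powr y * t..1} f + A t) / (L * t powr (\<zeta>+1)) = integral {0..y} (g t)"
      using ev
    proof eventually_elim
      case (elim y)
      have "integral {a powr y * t..1} f + A t = integral {a powr y * t..t} f"
        unfolding A_def using elim t a
        by (intro Henstock_Kurzweil_Integration.integral_combine integrable_continuous_interval fcont) auto
      then show ?case using subst[of t y] elim t by (simp add: integral_unique)
    qed
    have Ilim: "((\<lambda>y. integral {a powr y * t..1} f) \<longlongrightarrow> K) at_top"
    proof (rule LIM_zero_cancel, rule Lim_null_comparison)
      show "\<forall>\<^sub>F y in at_top. norm (integral {a powr y * t..1} f - K) \<le> C * ((a powr y * t) powr (\<zeta>+1) / (\<zeta>+1))"
        using ev
      proof eventually_elim
        case (elim y)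
        have "a powr y * t > 0" using a t by simp
        then show ?case using Kbound[of "a powr y * t"] elim by (simp add: abs_minus_commute)
      qed
      have "((\<lambda>y. (a powr y * t) powr (\<zeta>+1)) \<longlongrightarrow> 0) at_top"
        by (rule tendsto_zero_powrI[OF xlim tendsto_const]) (use a t zeta in auto)
      then have "((\<lambda>y. C * ((a powr y * t) powr (\<zeta>+1) / (\<zeta>+1))) \<longlongrightarrow> C * (0 / (\<zeta>+1))) at_top"
        using zeta by (intro tendsto_intros) auto
      then show "((\<lambda>y. C * ((a powr y * t) powr (\<zeta>+1) / (\<zeta>+1))) \<longlongrightarrow> 0) at_top" by simp
    qed
    have "((\<lambda>y. (integral {a powr y * t..1} f + A t) / (L * t powr (\<zeta>+1))) \<longlongrightarrow> (K + A t) / (L * t powr (\<zeta>+1))) at_top"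
      by (intro tendsto_intros Ilim) (use L t in auto)
    then show "((\<lambda>y. integral {0..y} (g t)) \<longlongrightarrow> (K + A t) / (L * t powr (\<zeta>+1))) at_top"
      using eq by (rule Lim_transform_eventually)
  qed
  have key: "t powr (\<zeta> + 1) * htilde a \<zeta> h t = K + A t" if t: "t \<ge> 1" for t
  proof -
    have "htilde a \<zeta> h t = - ln a * ((K + A t) / (L * t powr (\<zeta>+1)))"
      unfolding htilde_def using integral_unique[OF hint[OF t]] by (simp add: g_def)
    then show ?thesis using L t by (simp add: L_def)
  qed
  have Alow: "A t \<ge> c * ln t" if t: "t \<ge> 1" for t
  proof -
    have hi: "((\<lambda>s. c * (1 / s)) has_integral (c * ln t - c * ln 1)) {1..t}"
      using t by (intro fundamental_theorem_of_calculus)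
        (auto intro!: derivative_eq_intros simp flip: has_real_derivative_iff_has_vector_derivative)
    have "integral {1..t} (\<lambda>s. c * (1 / s)) \<le> integral {1..t} f"
    proof (intro integral_le)
      show "(\<lambda>s. c * (1 / s)) integrable_on {1..t}" using hi by blast
      show "f integrable_on {1..t}" by (intro integrable_continuous_interval fcont) auto
      show "c * (1 / s) \<le> f s" if s: "s \<in> {1..t}" for s
      proof -
        have "s powr (-1) \<le> s powr \<zeta>" using s zeta by (intro powr_mono) auto
        then have "1 / s \<le> s powr \<zeta>" using s by (simp add: powr_minus divide_inverse)
        moreover have "c \<le> h s" using c s by auto
        ultimately show ?thesis unfolding f_def using c s
          by (metis mult.commute mult_mono order.strict_implies_order powr_ge_zero)
      qed
    qed
    then show ?thesis using integral_unique[OF hi] unfolding A_def by simp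
  qed
  have Ktop: "filterlim (\<lambda>t. K + A t) at_top at_top"
  proof (rule filterlim_at_top_mono)
    show "filterlim (\<lambda>t. c * ln t) at_top at_top"
      by (rule filterlim_tendsto_pos_mult_at_top[OF tendsto_const c(1) ln_at_top])
    show "\<forall>\<^sub>F t in at_top. c * ln t \<le> K + A t"
      using eventually_ge_at_top[of 1] by eventually_elim (use Alow Knn in force)
  qed
  have "((\<lambda>t. 1 - K * inverse (K + A t)) \<longlongrightarrow> 1 - K * 0) at_top"
    by (intro tendsto_intros tendsto_inverse_0_at_top Ktop)
  then have lim1: "((\<lambda>t. 1 - K * inverse (K + A t)) \<longlongrightarrow> 1) at_top" by simp
  have "\<forall>\<^sub>F t in at_top. 1 - K * inverse (K + A t) =
      integral {1..t} (\<lambda>s. s powr \<zeta> * h s) / (t powr (\<zeta> + 1) * htilde a \<zeta> h t)"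
    using eventually_ge_at_top[of 1] eventually_gt_at_top[of 0, THEN filterlim_iff[THEN iffD1, OF Ktop, rule_format]]
  proof eventually_elim
    case (elim t)
    then have "K + A t \<noteq> 0" by simp
    then show ?case using key[OF elim(1)] unfolding A_def f_def by (simp add: field_simps)
  qed
  then show ?thesis by (rule Lim_transform_eventually[OF lim1])
qed
end
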